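(* Let $(M,g)$ and $(N,h)$ be Riemannian manifolds, $\dim M=m$, and $f:M\to N$ a smooth map such that $\tilde g=g-f^*h$ is positive definite. Let $b:M\to[0,1)$ be the largest eigenvalue of $f^*h$ with respect to $g$. Let $X_1,\dots,X_m$ be a local $g$-orthonormal frame, $\tilde g_{ij}=g(X_i,X_j)-h(df(X_i),df(X_j))$ with inverse $(\tilde g^{ij})$, and define \[ W=\mathrm{trace}_{g-f^*h}(\nabla df)=\sum_{i,j}\tilde g^{ij}\nabla df(X_i,X_j)\in C^\infty(f^{-1}TN),\qquad Z=\sum_{i,j}\tilde g^{ij}h(W,df(X_i))X_j\in C^\infty(TM). \] Then $\|Z\|\leq \frac{\sqrt b}{1-b}\|W\|$ and $\|W\|\leq\frac{\sqrt m}{1-b}\|\nabla df\|$.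
   Context: $\nabla df$ is the second fundamental form of $f$ (computed with the Levi-Civita connections of $g$ and $h$), with norm $\|\nabla df\|^2=\sum_{i,j}h(\nabla df(X_i,X_j),\nabla df(X_i,X_j))$; norms of $Z$ and $W$ are taken with respect to $g$ and $h$ respectively. *)

theory Defs
  imports "HOL-Analysis.Analysis"
begin

text \<open>Pointwise setting. The index type 'm enumerates a g-orthonormal frame
X_1..X_m of T_pM (so m = CARD('m)); vectors of T_pM are identified with their
frame coordinates in real^'m, and then g becomes the standard inner product.
The fibre T_{f(p)}N with metric h is a finite-dimensional inner product space 'b.
dF i = df(X_i), D i j = (nabla df)(X_i,X_j).\<close>

definition pullback_matrix :: "('m::finite \<Rightarrow> 'b::real_inner) \<Rightarrow> real^'m^'m" where
  "pullback_matrix dF = (\<chi> i j. dF i \<bullet> dF j)"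

definition gtilde_matrix :: "('m::finite \<Rightarrow> 'b::real_inner) \<Rightarrow> real^'m^'m" where
  "gtilde_matrix dF = mat 1 - pullback_matrix dF"

definition largest_eigenvalue :: "real^'n^'n \<Rightarrow> real" where
  "largest_eigenvalue A = Max {c. \<exists>x. x \<noteq> 0 \<and> A *v x = c *\<^sub>R x}"

definition W_field :: "('m::finite \<Rightarrow> 'b::real_inner) \<Rightarrow> ('m \<Rightarrow> 'm \<Rightarrow> 'b) \<Rightarrow> 'b" where
  "W_field dF D = (\<Sum>i\<in>UNIV. \<Sum>j\<in>UNIV. (matrix_inv (gtilde_matrix dF) $ i $ j) *\<^sub>R D i j)"

definition Z_field :: "('m::finite \<Rightarrow> 'b::real_inner) \<Rightarrow> ('m \<Rightarrow> 'm \<Rightarrow> 'b) \<Rightarrow> real^'m" where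
  "Z_field dF D = (\<chi> j. \<Sum>i\<in>UNIV. matrix_inv (gtilde_matrix dF) $ i $ j * (W_field dF D \<bullet> dF i))"

definition hess_norm :: "('m::finite \<Rightarrow> 'm \<Rightarrow> 'b::real_normed_vector) \<Rightarrow> real" where
  "hess_norm D = sqrt (\<Sum>i\<in>UNIV. \<Sum>j\<in>UNIV. (norm (D i j))\<^sup>2)"

end

theory Submission
  imports Defs
begin


definition lin :: "('m::finite \<Rightarrow> 'b::real_inner) \<Rightarrow> real^'m \<Rightarrow> 'b" where
  "lin dF y = (\<Sum>j\<in>UNIV. y$j *\<^sub>R dF j)"

lemma lin_linear: "linear (lin dF)"
  unfolding lin_def by (intro linearI) (auto simp: scaleR_add_left sum.distrib scaleR_sum_right)

lemma P_mult: "(pullback_matrix dF *v y) $ i = dF i \<bullet> lin dF y"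
  unfolding pullback_matrix_def lin_def matrix_vector_mult_def
  by (simp add: inner_sum_right mult.commute)

lemma quad: "x \<bullet> (pullback_matrix dF *v y) = lin dF x \<bullet> lin dF y"
  unfolding inner_vec_def P_mult
  by (simp add: lin_def inner_sum_left)



lemma quad_expand:
  fixes dF :: "'m::finite \<Rightarrow> 'b::real_inner"
  shows "(norm (lin dF (y + t *\<^sub>R z)))\<^sup>2 = (norm (lin dF y))\<^sup>2 + 2*t*(lin dF y \<bullet> lin dF z) + t\<^sup>2 * (norm (lin dF z))\<^sup>2"
proof -
  have "lin dF (y + t *\<^sub>R z) = lin dF y + t *\<^sub>R lin dF z"
    using lin_linear[of dF] by (simp add: linear_add linear_scale)
  then show ?thesis
    unfolding power2_norm_eq_inner by (simp add: inner_add_left inner_add_right power2_eq_square algebra_simps inner_commute)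
qed

lemma vec_expand:
  fixes y z :: "real^'m::finite"
  shows "(norm (y + t *\<^sub>R z))\<^sup>2 = (norm y)\<^sup>2 + 2*t*(y \<bullet> z) + t\<^sup>2 * (norm z)\<^sup>2"
  unfolding power2_norm_eq_inner by (simp add: inner_add_left inner_add_right power2_eq_square algebra_simps inner_commute)

lemma quad_lemma:
  fixes k r :: real
  assumes "\<And>t. 0 \<le> 2*t*k + t\<^sup>2 * r" "r \<ge> 0"
  shows "k = 0"
proof -
  define s where "s = 1/(r+1)"
  have s0: "s > 0" using assms(2) by (simp add: s_def)
  have sr: "s*r < 1" using assms(2) by (simp add: s_def field_simps)
  have "0 \<le> 2*(-s*k)*k + (-s*k)\<^sup>2 * r" using assms(1) .
  also have "\<dots> = (s*k\<^sup>2) * (s*r - 2)" by (simp add: algebra_simps power2_eq_square)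
  finally have h: "0 \<le> (s*k\<^sup>2) * (s*r - 2)" .
  have "s*k\<^sup>2 \<le> 0"
  proof (rule ccontr)
    assume "\<not> s*k\<^sup>2 \<le> 0"
    then have "(s*k\<^sup>2) * (s*r - 2) < 0" using sr by (intro mult_pos_neg) auto
    then show False using h by simp
  qed
  then have "k\<^sup>2 \<le> 0" using s0 by (simp add: mult_le_0_iff)
  then show ?thesis by simp
qed

lemma rayleigh:
  fixes dF :: "'m::finite \<Rightarrow> 'b::real_inner"
  obtains x0 where "norm x0 = 1"
    "\<And>x. (norm (lin dF x))\<^sup>2 \<le> (norm (lin dF x0))\<^sup>2 * (norm x)\<^sup>2"
    "pullback_matrix dF *v x0 = (norm (lin dF x0))\<^sup>2 *\<^sub>R x0"
proof -
  let ?q = "\<lambda>x. (norm (lin dF x))\<^sup>2"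
  have bl: "bounded_linear (lin dF)" using lin_linear[of dF] linear_conv_bounded_linear by blast
  have cont: "continuous_on (sphere (0::real^'m) 1) ?q"
    by (intro continuous_intros linear_continuous_on bl)
  obtain i :: 'm where True by simp
  have ne: "sphere (0::real^'m) 1 \<noteq> {}"
    using vector_choose_size[of 1] by (auto simp: sphere_def)
  obtain y where y: "y \<in> sphere 0 1" and ymax: "\<And>x. x \<in> sphere 0 1 \<Longrightarrow> ?q x \<le> ?q y"
    using continuous_attains_sup[OF compact_sphere ne cont] by blast
  have ny: "norm y = 1" using y by simp
  let ?l = "?q y"
  have bound: "?q x \<le> ?l * (norm x)\<^sup>2" for x
  proof (cases "x = 0")
    case True then show ?thesis using linear_0[OF lin_linear[of dF]] by simp
  next
    case False
    then have "(1/norm x) *\<^sub>R x \<in> sphere 0 1" by simp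
    then have "?q ((1/norm x) *\<^sub>R x) \<le> ?l" by (rule ymax)
    moreover have "lin dF ((1/norm x) *\<^sub>R x) = (1/norm x) *\<^sub>R lin dF x"
      using lin_linear[of dF] by (simp add: linear_scale)
    ultimately have "?q x / (norm x)\<^sup>2 \<le> ?l"
      by (simp add: power_divide)
    then show ?thesis using False by (simp add: divide_le_eq mult.commute)
  qed
  define z where "z = ?l *\<^sub>R y - pullback_matrix dF *v y"
  define r where "r = ?l * (norm z)\<^sup>2 - ?q z"
  have r0: "r \<ge> 0" unfolding r_def using bound[of z] by simp
  have kz: "?l * (y \<bullet> z) - lin dF y \<bullet> lin dF z = z \<bullet> z"
  proof -
    have "z \<bullet> z = ?l * (z \<bullet> y) - z \<bullet> (pullback_matrix dF *v y)"
      by (simp add: z_def inner_diff_right)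
    also have "\<dots> = ?l * (y \<bullet> z) - lin dF y \<bullet> lin dF z"
      by (simp add: quad inner_commute)
    finally show ?thesis by simp
  qed
  have "0 \<le> 2*t*(z \<bullet> z) + t\<^sup>2 * r" for t
  proof -
    have "?q (y + t *\<^sub>R z) \<le> ?l * (norm (y + t *\<^sub>R z))\<^sup>2" by (rule bound)
    then have "?l + 2*t*(lin dF y \<bullet> lin dF z) + t\<^sup>2 * ?q z \<le> ?l * (1 + 2*t*(y \<bullet> z) + t\<^sup>2 * (norm z)\<^sup>2)"
      unfolding quad_expand vec_expand ny by simp
    then show ?thesis unfolding r_def kz[symmetric] by (simp add: algebra_simps)
  qed
  then have "z \<bullet> z = 0" using quad_lemma r0 by blast
  then have "z = 0" by simp
  then have "pullback_matrix dF *v y = ?l *\<^sub>R y" unfolding z_def by simp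
  then show ?thesis using that ny bound by blast
qed



lemma eig_finite:
  fixes dF :: "'m::finite \<Rightarrow> 'b::real_inner"
  shows "finite {c. \<exists>x. x \<noteq> 0 \<and> pullback_matrix dF *v x = c *\<^sub>R x}"
    (is "finite ?S")
proof -
  define f where "f c = (SOME x. x \<noteq> 0 \<and> pullback_matrix dF *v x = c *\<^sub>R x)" for c
  have f: "f c \<noteq> 0 \<and> pullback_matrix dF *v f c = c *\<^sub>R f c" if "c \<in> ?S" for c
    using someI_ex[of "\<lambda>x. x \<noteq> 0 \<and> pullback_matrix dF *v x = c *\<^sub>R x"] that
    unfolding f_def by auto
  have orth: "f c \<bullet> f d = 0" if "c \<in> ?S" "d \<in> ?S" "c \<noteq> d" for c d
  proof -
    have "c * (f c \<bullet> f d) = f d \<bullet> (pullback_matrix dF *v f c)"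
      using f[OF that(1)] by (simp add: inner_commute)
    also have "\<dots> = f c \<bullet> (pullback_matrix dF *v f d)"
      by (simp add: quad inner_commute)
    also have "\<dots> = d * (f c \<bullet> f d)" using f[OF that(2)] by simp
    finally show ?thesis using that(3) by simp
  qed
  have inj: "inj_on f ?S"
  proof (rule inj_onI)
    fix c d assume c: "c \<in> ?S" and d: "d \<in> ?S" and e: "f c = f d"
    show "c = d"
    proof (rule ccontr)
      assume "c \<noteq> d"
      then have "f c \<bullet> f c = 0" using orth[OF c d] e by simp
      then show False using f[OF c] by simp
    qed
  qed
  have "pairwise orthogonal (f ` ?S)"
    unfolding pairwise_def orthogonal_def using orth by blast
  moreover have "0 \<notin> f ` ?S" using f by fastforce
  ultimately have "independent (f ` ?S)" by (rule pairwise_orthogonal_independent)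
  then have "finite (f ` ?S)" using independent_bound by blast
  then show ?thesis using finite_imageD inj by blast
qed

lemma b_eq:
  fixes dF :: "'m::finite \<Rightarrow> 'b::real_inner"
  assumes "norm x0 = 1"
    "\<And>x. (norm (lin dF x))\<^sup>2 \<le> (norm (lin dF x0))\<^sup>2 * (norm x)\<^sup>2"
    "pullback_matrix dF *v x0 = (norm (lin dF x0))\<^sup>2 *\<^sub>R x0"
  shows "largest_eigenvalue (pullback_matrix dF) = (norm (lin dF x0))\<^sup>2"
  unfolding largest_eigenvalue_def
proof (rule Max_eqI[OF eig_finite])
  show "(norm (lin dF x0))\<^sup>2 \<in> {c. \<exists>x. x \<noteq> 0 \<and> pullback_matrix dF *v x = c *\<^sub>R x}"
    using assms(1,3) by (auto intro!: exI[of _ x0])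
next
  fix c assume "c \<in> {c. \<exists>x. x \<noteq> 0 \<and> pullback_matrix dF *v x = c *\<^sub>R x}"
  then obtain x where x: "x \<noteq> 0" "pullback_matrix dF *v x = c *\<^sub>R x" by auto
  have "c * (norm x)\<^sup>2 = x \<bullet> (pullback_matrix dF *v x)"
    using x by (simp add: power2_norm_eq_inner)
  also have "\<dots> = (norm (lin dF x))\<^sup>2" by (simp add: quad power2_norm_eq_inner)
  also have "\<dots> \<le> (norm (lin dF x0))\<^sup>2 * (norm x)\<^sup>2" by (rule assms(2))
  finally show "c \<le> (norm (lin dF x0))\<^sup>2" using x by simp
qed



theorem lemma2p2:
  fixes dF :: "'m::finite \<Rightarrow> 'b::euclidean_space"
    and D :: "'m \<Rightarrow> 'm \<Rightarrow> 'b"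
  assumes sym: "\<And>i j. D i j = D j i"
    and posdef: "\<And>x::real^'m. x \<noteq> 0 \<Longrightarrow> x \<bullet> (gtilde_matrix dF *v x) > 0"
  defines "b \<equiv> largest_eigenvalue (pullback_matrix dF)"
  shows "norm (Z_field dF D) \<le> sqrt b / (1 - b) * norm (W_field dF D) \<and>
         norm (W_field dF D) \<le> sqrt (real CARD('m)) / (1 - b) * hess_norm D"
proof -
  obtain x0 where x0: "norm x0 = 1"
    "\<And>x. (norm (lin dF x))\<^sup>2 \<le> (norm (lin dF x0))\<^sup>2 * (norm x)\<^sup>2"
    "pullback_matrix dF *v x0 = (norm (lin dF x0))\<^sup>2 *\<^sub>R x0"
    using rayleigh by blast
  have bdef: "b = (norm (lin dF x0))\<^sup>2" unfolding b_def using b_eq[OF x0] .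
  have b0: "b \<ge> 0" unfolding bdef by simp
  have bnd: "(norm (lin dF x))\<^sup>2 \<le> b * (norm x)\<^sup>2" for x using x0(2) bdef by simp
  let ?P = "pullback_matrix dF"
  let ?G = "gtilde_matrix dF"
  have Gv: "?G *v x = x - ?P *v x" for x
    unfolding gtilde_matrix_def by (simp add: matrix_vector_mult_diff_rdistrib)
  have GQ: "x \<bullet> (?G *v x) = (norm x)\<^sup>2 - (norm (lin dF x))\<^sup>2" for x
    unfolding Gv by (simp add: inner_diff_right quad power2_norm_eq_inner)
  have b1: "b < 1"
  proof -
    have "x0 \<noteq> 0" using x0(1) by auto
    then have "0 < x0 \<bullet> (?G *v x0)" by (rule posdef)
    then show ?thesis unfolding GQ x0(1) bdef by simp
  qed
  have coer: "(1 - b) * (norm y)\<^sup>2 \<le> y \<bullet> (?G *v y)" for y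
    unfolding GQ using bnd[of y] by (simp add: algebra_simps)
  have ker: "\<forall>x. ?G *v x = 0 \<longrightarrow> x = 0"
  proof (intro allI impI)
    fix x assume "?G *v x = 0"
    then have "(1 - b) * (norm x)\<^sup>2 \<le> 0" using coer[of x] by simp
    then show "x = 0" using b1 by (simp add: mult_le_0_iff)
  qed
  then have "invertible ?G"
    using matrix_left_invertible_ker invertible_left_inverse by blast
  then have "?G ** matrix_inv ?G = mat 1 \<and> matrix_inv ?G ** ?G = mat 1"
    unfolding invertible_def matrix_inv_def by (rule someI_ex)
  then have GI: "matrix_inv ?G ** ?G = mat 1" by blast
  define T where "T = transpose (matrix_inv ?G)"
  have Gsym: "transpose ?G = ?G"
    unfolding gtilde_matrix_def pullback_matrix_def
    by (simp add: transpose_def vec_eq_iff mat_def inner_commute)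
  have GT: "?G ** T = mat 1"
    using arg_cong[OF GI, of transpose] unfolding T_def matrix_transpose_mul Gsym
    by (simp add: transpose_mat)
  have GTv: "?G *v (T *v v) = v" for v
    by (simp add: matrix_vector_mul_assoc GT)
  have solve: "(1 - b) * norm (T *v v) \<le> norm v" for v
  proof -
    let ?y = "T *v v"
    have "(1 - b) * (norm ?y)\<^sup>2 \<le> ?y \<bullet> v" using coer[of ?y] GTv by simp
    also have "\<dots> \<le> norm ?y * norm v" by (rule norm_cauchy_schwarz)
    finally have "((1 - b) * norm ?y) * norm ?y \<le> norm v * norm ?y"
      by (simp add: power2_eq_square algebra_simps)
    then show ?thesis
      by (cases "norm ?y = 0") (auto simp: mult_le_cancel_right b1)
  qed
  define v where "v = (\<chi> i. W_field dF D \<bullet> dF i)"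
  have Zeq: "Z_field dF D = T *v v"
    unfolding Z_field_def T_def v_def
    by (simp add: vec_eq_iff matrix_vector_mult_def transpose_def)
  have part1: "norm (Z_field dF D) \<le> sqrt b / (1 - b) * norm (W_field dF D)"
  proof -
    let ?y = "T *v v"
    have yv: "?y \<bullet> v = W_field dF D \<bullet> lin dF ?y"
      unfolding v_def lin_def inner_vec_def
      by (simp add: inner_sum_right inner_commute)
    have nl: "norm (lin dF ?y) \<le> sqrt b * norm ?y"
    proof -
      have "norm (lin dF ?y) = sqrt ((norm (lin dF ?y))\<^sup>2)" by simp
      also have "\<dots> \<le> sqrt (b * (norm ?y)\<^sup>2)" using bnd by (rule real_sqrt_le_mono)
      also have "\<dots> = sqrt b * norm ?y" by (simp add: real_sqrt_mult)
      finally show ?thesis .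
    qed
    have "(1 - b) * (norm ?y)\<^sup>2 \<le> ?y \<bullet> v" using coer[of ?y] GTv by simp
    also have "\<dots> \<le> norm (W_field dF D) * norm (lin dF ?y)"
      unfolding yv by (rule norm_cauchy_schwarz)
    also have "\<dots> \<le> norm (W_field dF D) * (sqrt b * norm ?y)"
      using nl by (simp add: mult_left_mono)
    finally have "((1 - b) * norm ?y) * norm ?y \<le> (sqrt b * norm (W_field dF D)) * norm ?y"
      by (simp add: power2_eq_square algebra_simps)
    then have "(1 - b) * norm ?y \<le> sqrt b * norm (W_field dF D)"
      by (cases "norm ?y = 0") (auto simp: mult_le_cancel_right b1 b0)
    then show ?thesis unfolding Zeq using b1 by (simp add: field_simps)
  qed
  define a where "a = (\<lambda>p::'m\<times>'m. matrix_inv ?G $ fst p $ snd p)"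
  have row: "(\<Sum>j\<in>UNIV. (matrix_inv ?G $ i $ j)\<^sup>2) \<le> 1 / (1 - b)\<^sup>2" for i
  proof -
    have e: "T *v axis i 1 = (\<chi> j. matrix_inv ?G $ i $ j)"
      unfolding T_def by (simp add: vec_eq_iff matrix_vector_mult_def transpose_def axis_def mult_delta_right)
    have "(1 - b) * norm (T *v axis i 1) \<le> 1" using solve[of "axis i 1"] by simp
    then have "norm (T *v axis i 1) \<le> 1 / (1 - b)" using b1 by (simp add: field_simps)
    then have "(norm (T *v axis i 1))\<^sup>2 \<le> (1 / (1 - b))\<^sup>2"
      by (intro power_mono) auto
    then show ?thesis unfolding e by (simp add: norm_vec_def L2_set_def power_divide sum_nonneg)
  qed
  have sa: "(\<Sum>p\<in>UNIV. (a p)\<^sup>2) \<le> real CARD('m) / (1 - b)\<^sup>2"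
  proof -
    have "(\<Sum>p\<in>UNIV. (a p)\<^sup>2) = (\<Sum>i\<in>UNIV. \<Sum>j\<in>UNIV. (matrix_inv ?G $ i $ j)\<^sup>2)"
      unfolding a_def UNIV_Times_UNIV[symmetric] sum.cartesian_product by (simp add: case_prod_beta)
    also have "\<dots> \<le> (\<Sum>i\<in>(UNIV::'m set). 1 / (1 - b)\<^sup>2)" by (intro sum_mono row)
    finally show ?thesis by simp
  qed
  have "norm (W_field dF D) \<le> (\<Sum>i\<in>UNIV. \<Sum>j\<in>UNIV. \<bar>matrix_inv ?G $ i $ j\<bar> * norm (D i j))"
    unfolding W_field_def
    by (rule order_trans[OF norm_sum sum_mono], rule order_trans[OF norm_sum sum_mono]) simp
  also have "\<dots> = (\<Sum>p\<in>UNIV. \<bar>a p\<bar> * \<bar>norm (case_prod D p)\<bar>)"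
    unfolding a_def UNIV_Times_UNIV[symmetric] sum.cartesian_product by (simp add: case_prod_beta)
  also have "\<dots> \<le> L2_set a UNIV * L2_set (\<lambda>p. norm (case_prod D p)) UNIV"
    by (rule L2_set_mult_ineq)
  also have "L2_set (\<lambda>p. norm (case_prod D p)) UNIV = hess_norm D"
    unfolding L2_set_def hess_norm_def UNIV_Times_UNIV[symmetric] sum.cartesian_product by (simp add: case_prod_beta)
  also have "L2_set a UNIV \<le> sqrt (real CARD('m)) / (1 - b)"
  proof -
    have "L2_set a UNIV \<le> sqrt (real CARD('m) / (1 - b)\<^sup>2)"
      unfolding L2_set_def using sa by (rule real_sqrt_le_mono)
    also have "\<dots> = sqrt (real CARD('m)) / (1 - b)"
      using b1 by (simp add: real_sqrt_divide)
    finally show ?thesis .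
  qed
  then have "L2_set a UNIV * hess_norm D \<le> sqrt (real CARD('m)) / (1 - b) * hess_norm D"
    by (rule mult_right_mono) (simp add: hess_norm_def sum_nonneg)
  finally show ?thesis using part1 by simp
qed

end
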